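(* Let $W\in\mathbb{C}[x_1,\dots,x_n]$ be a nondegenerate quasihomogeneous polynomial, $G$ a finite subgroup of $G_W$, and $g\in G$ with $n_g>0$. Then $W^g$ is a nondegenerate quasihomogeneous polynomial in $R^g$, and the centralizer $C_G(g)$ (acting on $V^g$ by restriction) is a finite subgroup of the symmetry group $G_{W^g}$.
   Context: $W$ is quasihomogeneous: there are positive integers $w_1,\dots,w_n,d$ with $W(\lambda^{w_1}x_1,\dots,\lambda^{w_n}x_n)=\lambda^dW$; the charge of $x_i$ is $q_i=w_i/d$. Nondegenerate means the Jacobi ring $\mathbb{C}[x]/(\partial W/\partial x_1,\dots,\partial W/\partial x_n)$ is finite dimensional. $\mathrm{GL}_n(\mathbb{C})$ acts on $V=\bigoplus\mathbb{C}x_i$ by $g\cdot x_i=\sum_j g_{ij}x_j$ and on polynomials by $(g\cdot f)(x)=f(g\cdot x_1,\dots,g\cdot x_n)$. $G_W=\{g\in\mathrm{GL}_n(\mathbb{C}): g\cdot W=W,\ g_{ij}=0\text{ if }w_i\ne w_j\}$ (the symmetry group; defined likewise for any nondegenerate quasihomogeneous polynomial). For $g\in G$, choose eigenvectors $y_1,\dots,y_n\in V$ of $g$ forming a basis, with eigenvalues $\lambda_1,\dots,\lambda_n$, such that $y_i$ has the same weight/charge as $x_i$ (possible since $g$ is block diagonal by weight). Let $W'$ be the polynomial with $W'(y_1,\dots,y_n)=W(x_1,\dots,x_n)$. Let $V^g=\ker(E_n-g)$, $n_g=\dim V^g$, $I^g=\{i:\lambda_i=1\}=\{i_1,\dots,i_{n_g}\}$,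 $R^g=\mathbb{C}[y_{i_1},\dots,y_{i_{n_g}}]$, and $W^g=W'|_{y_i=0\ (i\notin I^g)}\in R^g$. *)

theory Defs
  imports Complex_Main "HOL-Library.Poly_Mapping" "HOL-Algebra.Group"
begin

text \<open>Multivariate complex polynomials: finitely supported maps from exponent
vectors (variable index \<Rightarrow> exponent) to coefficients.\<close>

type_synonym mpoly = "(nat \<Rightarrow>\<^sub>0 nat) \<Rightarrow>\<^sub>0 complex"

definition Var :: "nat \<Rightarrow> mpoly" where
  "Var i = Poly_Mapping.single (Poly_Mapping.single i 1) 1"

definition Const :: "complex \<Rightarrow> mpoly" where
  "Const c = Poly_Mapping.single 0 c"

definition poly_in :: "nat set \<Rightarrow> mpoly \<Rightarrow> bool" where
  "poly_in S p \<longleftrightarrow> (\<forall>m \<in> Poly_Mapping.keys p. Poly_Mapping.keys m \<subseteq> S)"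

definition subst :: "(nat \<Rightarrow> mpoly) \<Rightarrow> mpoly \<Rightarrow> mpoly" where
  "subst \<sigma> p = (\<Sum>m \<in> Poly_Mapping.keys p. Const (Poly_Mapping.lookup p m) * (\<Prod>i \<in> Poly_Mapping.keys m. \<sigma> i ^ Poly_Mapping.lookup m i))"

definition pderiv_var :: "nat \<Rightarrow> mpoly \<Rightarrow> mpoly" where
  "pderiv_var i p = (\<Sum>m \<in> Poly_Mapping.keys p.
      Poly_Mapping.single (m - Poly_Mapping.single i 1) (Poly_Mapping.lookup p m * of_nat (Poly_Mapping.lookup m i)))"

definition quasihomogeneous :: "nat set \<Rightarrow> (nat \<Rightarrow> nat) \<Rightarrow> nat \<Rightarrow> mpoly \<Rightarrow> bool" where
  "quasihomogeneous S w d W \<longleftrightarrow>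
     poly_in S W \<and> (\<forall>i \<in> S. w i > 0) \<and> d > 0 \<and>
     (\<forall>t::complex. subst (\<lambda>i. if i \<in> S then Const (t ^ w i) * Var i else Var i) W
                    = Const (t ^ d) * W)"

definition jacobian_ideal :: "nat set \<Rightarrow> mpoly \<Rightarrow> mpoly set" where
  "jacobian_ideal S W =
     {\<Sum>i \<in> S. a i * pderiv_var i W | a. \<forall>i \<in> S. poly_in S (a i)}"

text \<open>Nondegenerate: the Jacobi ring C[x_i : i in S]/(\<partial>W/\<partial>x_i) is a finite dimensional
complex vector space, i.e. spanned by the classes of finitely many polynomials.\<close>
definition nondegenerate :: "nat set \<Rightarrow> mpoly \<Rightarrow> bool" where
  "nondegenerate S W \<longleftrightarrow>
     (\<exists>B. finite B \<and> B \<subseteq> {p. poly_in S p} \<and>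
        (\<forall>p. poly_in S p \<longrightarrow>
           (\<exists>c. p - (\<Sum>b \<in> B. Const (c b) * b) \<in> jacobian_ideal S W)))"

text \<open>Square complex matrices indexed by S \<times> S (entries outside S \<times> S are zero).\<close>
type_synonym cmat = "nat \<Rightarrow> nat \<Rightarrow> complex"

definition mmul :: "nat set \<Rightarrow> cmat \<Rightarrow> cmat \<Rightarrow> cmat" where
  "mmul S A B = (\<lambda>i k. if i \<in> S \<and> k \<in> S then \<Sum>j \<in> S. A i j * B j k else 0)"

definition idm :: "nat set \<Rightarrow> cmat" where
  "idm S = (\<lambda>i j. if i \<in> S \<and> i = j then 1 else 0)"

definition supported :: "nat set \<Rightarrow> cmat \<Rightarrow> bool" where
  "supported S A \<longleftrightarrow> (\<forall>i j. (i \<notin> S \<or> j \<notin> S) \<longrightarrow> A i j = 0)"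

definition GLset :: "nat set \<Rightarrow> cmat set" where
  "GLset S = {A. supported S A \<and>
     (\<exists>B. supported S B \<and> mmul S A B = idm S \<and> mmul S B A = idm S)}"

definition act :: "nat set \<Rightarrow> cmat \<Rightarrow> mpoly \<Rightarrow> mpoly" where
  "act S g f = subst (\<lambda>i. if i \<in> S then (\<Sum>j \<in> S. Const (g i j) * Var j) else Var i) f"

definition GL_group :: "nat set \<Rightarrow> cmat monoid" where
  "GL_group S = \<lparr>carrier = GLset S, mult = mmul S, one = idm S\<rparr>"

definition sym_set :: "nat set \<Rightarrow> (nat \<Rightarrow> nat) \<Rightarrow> mpoly \<Rightarrow> cmat set" where
  "sym_set S w W = {g \<in> GLset S. act S g W = W \<and>
      (\<forall>i \<in> S. \<forall>j \<in> S. w i \<noteq> w j \<longrightarrow> g i j = 0)}"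

definition sym_group :: "nat set \<Rightarrow> (nat \<Rightarrow> nat) \<Rightarrow> mpoly \<Rightarrow> cmat monoid" where
  "sym_group S w W = \<lparr>carrier = sym_set S w W, mult = mmul S, one = idm S\<rparr>"

end

theory Submission
  imports Defs
begin


abbreviation lk :: "('a \<Rightarrow>\<^sub>0 'b::zero) \<Rightarrow> 'a \<Rightarrow> 'b" where "lk \<equiv> Poly_Mapping.lookup"
abbreviation ks :: "('a \<Rightarrow>\<^sub>0 'b::zero) \<Rightarrow> 'a set" where "ks \<equiv> Poly_Mapping.keys"
abbreviation sg :: "'a \<Rightarrow> 'b \<Rightarrow> ('a \<Rightarrow>\<^sub>0 'b::zero)" where "sg \<equiv> Poly_Mapping.single"

lemma Const_0 [simp]: "Const 0 = 0" by (simp add: Const_def)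
lemma Const_1 [simp]: "Const 1 = 1" by (simp add: Const_def)
lemma Const_add: "Const (a + b) = Const a + Const b" by (simp add: Const_def single_add)
lemma Const_mult: "Const (a * b) = Const a * Const b" by (simp add: Const_def mult_single)
lemma Const_diff: "Const (a - b) = Const a - Const b" by (simp add: Const_def single_diff)
lemma Const_sum: "Const (sum f A) = (\<Sum>x\<in>A. Const (f x))"
  by (induction A rule: infinite_finite_induct) (auto simp: Const_add)
lemma Const_mult_single: "Const c * sg m a = sg m (c * a)"
  by (simp add: Const_def mult_single)
lemma lookup_Const_mult: "lk (Const c * p) m = c * lk p m"
proof -
  have "Const c * p = Poly_Mapping.map ((*) c) p" by (simp add: Const_def mult_map_scale_conv_mult)
  then show ?thesis by (simp add: Poly_Mapping.map.rep_eq when_def)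
qed
lemma Const_mult_eq_0: "Const c * p = 0 \<Longrightarrow> c \<noteq> 0 \<Longrightarrow> p = 0"
  by (metis lookup_Const_mult lookup_zero mult_eq_0_iff poly_mapping_eqI)

lemma pm_expand: "(p :: 'a \<Rightarrow>\<^sub>0 'b::comm_monoid_add) = (\<Sum>m\<in>ks p. sg m (lk p m))"
proof (rule poly_mapping_eqI)
  fix k
  have "lk (\<Sum>m\<in>ks p. sg m (lk p m)) k = (\<Sum>m\<in>ks p. if m = k then lk p m else 0)"
    by (simp add: lookup_sum lookup_single when_def)
  also have "\<dots> = lk p k" by (simp add: in_keys_iff)
  finally show "lk p k = lk (\<Sum>m\<in>ks p. sg m (lk p m)) k" by simp
qed




definition lin :: "((nat \<Rightarrow>\<^sub>0 nat) \<Rightarrow> mpoly) \<Rightarrow> mpoly \<Rightarrow> mpoly" where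
  "lin f p = (\<Sum>m\<in>ks p. Const (lk p m) * f m)"

lemma lin_superset: "finite K \<Longrightarrow> ks p \<subseteq> K \<Longrightarrow> lin f p = (\<Sum>m\<in>K. Const (lk p m) * f m)"
  unfolding lin_def by (rule sum.mono_neutral_left) (auto simp: in_keys_iff)

lemma lin_add: "lin f (p + q) = lin f p + lin f q"
proof -
  let ?K = "ks p \<union> ks q"
  have "lin f (p + q) = (\<Sum>m\<in>?K. Const (lk (p+q) m) * f m)"
    by (rule lin_superset) (auto dest: subsetD[OF keys_add])
  also have "\<dots> = (\<Sum>m\<in>?K. Const (lk p m) * f m) + (\<Sum>m\<in>?K. Const (lk q m) * f m)"
    by (simp add: lookup_add Const_add distrib_right sum.distrib)
  also have "\<dots> = lin f p + lin f q"
    by (simp add: lin_superset[symmetric])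
  finally show ?thesis .
qed

lemma lin_zero [simp]: "lin f 0 = 0" by (simp add: lin_def)

lemma lin_single [simp]: "lin f (sg m c) = Const c * f m"
  by (cases "c = 0") (auto simp: lin_def)

lemma lin_sum: "lin f (sum g A) = (\<Sum>x\<in>A. lin f (g x))"
  by (induction A rule: infinite_finite_induct) (auto simp: lin_add)

lemma lin_Const_mult: "lin f (Const c * p) = Const c * lin f p"
proof -
  have "lin f (Const c * p) = (\<Sum>m\<in>ks p. Const (lk (Const c * p) m) * f m)"
    by (rule lin_superset) (auto simp: in_keys_iff lookup_Const_mult)
  then show ?thesis by (simp add: lin_def lookup_Const_mult Const_mult sum_distrib_left mult.assoc)
qed

lemma prod_expand: "p * q = (\<Sum>m1\<in>ks p. \<Sum>m2\<in>ks q. sg (m1 + m2) (lk p m1 * lk q m2))"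
proof -
  have "p * q = (\<Sum>m1\<in>ks p. sg m1 (lk p m1)) * (\<Sum>m2\<in>ks q. sg m2 (lk q m2))"
    by (metis pm_expand)
  also have "\<dots> = (\<Sum>m1\<in>ks p. \<Sum>m2\<in>ks q. sg m1 (lk p m1) * sg m2 (lk q m2))"
    by (simp add: sum_product)
  finally show ?thesis by (simp add: mult_single)
qed

lemma lin_expand: "lin f p = (\<Sum>m\<in>ks p. lin f (sg m (lk p m)))"
  by (simp only: lin_single) (simp add: lin_def)

lemma lin_mult:
  assumes "\<And>m1 m2. f (m1 + m2) = f m1 * f m2"
  shows "lin f (p * q) = lin f p * lin f q"
proof -
  have "lin f (p * q) = (\<Sum>m1\<in>ks p. \<Sum>m2\<in>ks q. Const (lk p m1 * lk q m2) * f (m1 + m2))"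
    by (simp add: prod_expand lin_sum)
  also have "\<dots> = (\<Sum>m1\<in>ks p. \<Sum>m2\<in>ks q. (Const (lk p m1) * f m1) * (Const (lk q m2) * f m2))"
    by (simp add: assms Const_mult ac_simps)
  also have "\<dots> = lin f p * lin f q"
    by (simp add: lin_def sum_product)
  finally show ?thesis .
qed

lemma lin_deriv:
  assumes "\<And>m1 m2. f (m1 + m2) = f m1 * sg m2 1 + sg m1 1 * f m2"
  shows "lin f (p * q) = lin f p * q + p * lin f q"
proof -
  have "lin f (p * q) = (\<Sum>m1\<in>ks p. \<Sum>m2\<in>ks q. Const (lk p m1 * lk q m2) * f (m1 + m2))"
    by (simp add: prod_expand lin_sum)
  also have "\<dots> = (\<Sum>m1\<in>ks p. \<Sum>m2\<in>ks q. (Const (lk p m1) * f m1) * sg m2 (lk q m2))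
       + (\<Sum>m1\<in>ks p. \<Sum>m2\<in>ks q. sg m1 (lk p m1) * (Const (lk q m2) * f m2))"
  proof -
    have "Const (lk p m1 * lk q m2) * f (m1 + m2) = (Const (lk p m1) * f m1) * sg m2 (lk q m2)
       + sg m1 (lk p m1) * (Const (lk q m2) * f m2)" for m1 m2
    proof -
      have e1: "sg m2 (lk q m2) = Const (lk q m2) * sg m2 1" by (simp add: Const_mult_single)
      have e2: "sg m1 (lk p m1) = Const (lk p m1) * sg m1 1" by (simp add: Const_mult_single)
      show ?thesis unfolding e1 e2 assms Const_mult by (simp add: algebra_simps)
    qed
    then show ?thesis by (simp add: sum.distrib)
  qed
  also have "\<dots> = lin f p * q + p * lin f q"
    by (subst (3 4) pm_expand) (simp add: lin_def sum_product)
  finally show ?thesis .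
qed




definition mono :: "(nat \<Rightarrow> mpoly) \<Rightarrow> (nat \<Rightarrow>\<^sub>0 nat) \<Rightarrow> mpoly" where
  "mono \<sigma> m = (\<Prod>i\<in>ks m. \<sigma> i ^ lk m i)"

lemma subst_lin: "subst \<sigma> p = lin (mono \<sigma>) p"
  by (simp add: subst_def lin_def mono_def)

lemma mono_superset: "finite K \<Longrightarrow> ks m \<subseteq> K \<Longrightarrow> mono \<sigma> m = (\<Prod>i\<in>K. \<sigma> i ^ lk m i)"
  unfolding mono_def by (rule prod.mono_neutral_left) (auto simp: in_keys_iff)

lemma mono_add: "mono \<sigma> (m1 + m2) = mono \<sigma> m1 * mono \<sigma> m2"
proof -
  let ?K = "ks m1 \<union> ks m2"
  have "mono \<sigma> (m1 + m2) = (\<Prod>i\<in>?K. \<sigma> i ^ lk (m1 + m2) i)"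
    by (rule mono_superset) (auto dest: subsetD[OF keys_add])
  also have "\<dots> = (\<Prod>i\<in>?K. \<sigma> i ^ lk m1 i) * (\<Prod>i\<in>?K. \<sigma> i ^ lk m2 i)"
    by (simp add: lookup_add power_add prod.distrib)
  also have "\<dots> = mono \<sigma> m1 * mono \<sigma> m2" by (simp add: mono_superset[symmetric])
  finally show ?thesis .
qed

lemma mono_zero [simp]: "mono \<sigma> 0 = 1" by (simp add: mono_def)

lemma subst_add [simp]: "subst \<sigma> (p + q) = subst \<sigma> p + subst \<sigma> q"
  by (simp add: subst_lin lin_add)
lemma subst_mult [simp]: "subst \<sigma> (p * q) = subst \<sigma> p * subst \<sigma> q"
  by (simp add: subst_lin lin_mult mono_add)
lemma subst_zero [simp]: "subst \<sigma> 0 = 0" by (simp add: subst_lin)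
lemma subst_Const [simp]: "subst \<sigma> (Const c) = Const c"
  by (simp add: subst_lin Const_def)
lemma subst_one [simp]: "subst \<sigma> 1 = 1"
  using subst_Const[of \<sigma> 1] by simp
lemma subst_Var [simp]: "subst \<sigma> (Var i) = \<sigma> i"
  by (simp add: subst_lin Var_def mono_def)
lemma subst_sum: "subst \<sigma> (sum f A) = (\<Sum>x\<in>A. subst \<sigma> (f x))"
  by (induction A rule: infinite_finite_induct) auto
lemma subst_prod: "subst \<sigma> (prod f A) = (\<Prod>x\<in>A. subst \<sigma> (f x))"
  by (induction A rule: infinite_finite_induct) auto
lemma subst_power [simp]: "subst \<sigma> (p ^ k) = subst \<sigma> p ^ k"
  by (induction k) auto
lemma subst_uminus [simp]: "subst \<sigma> (- p) = - subst \<sigma> p"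
  by (metis add_eq_0_iff2 add.right_inverse subst_add subst_zero)
lemma subst_diff [simp]: "subst \<sigma> (p - q) = subst \<sigma> p - subst \<sigma> q"
  by (metis diff_conv_add_uminus subst_add subst_uminus)

lemma Var_power: "Var i ^ k = sg (sg i k) 1"
proof (induction k)
  case 0 then show ?case by simp
next
  case (Suc k)
  have "sg i (Suc k) = sg i 1 + sg i k" by (simp add: single_add[symmetric])
  then show ?case using Suc by (simp add: Var_def mult_single)
qed

lemma prod_Var_power: "finite K \<Longrightarrow> (\<Prod>i\<in>K. Var i ^ e i) = sg (\<Sum>i\<in>K. sg i (e i)) 1"
  by (induction K rule: finite_induct) (auto simp: Var_power mult_single)

lemma mono_Var: "mono Var m = sg m 1"
  unfolding mono_def by (simp add: prod_Var_power pm_expand[symmetric])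

lemma subst_Var_id [simp]: "subst Var p = p"
  unfolding subst_lin mono_Var lin_def by (subst (2) pm_expand) (simp add: Const_mult_single)


lemma poly_in_Const [simp]: "poly_in V (Const c)"
  by (simp add: poly_in_def Const_def)
lemma poly_in_Var [simp]: "i \<in> V \<Longrightarrow> poly_in V (Var i)"
  by (simp add: poly_in_def Var_def)
lemma poly_in_zero [simp]: "poly_in V 0" by (simp add: poly_in_def)
lemma poly_in_one [simp]: "poly_in V 1" by (simp add: poly_in_def)
lemma poly_in_add [simp]: "poly_in V p \<Longrightarrow> poly_in V q \<Longrightarrow> poly_in V (p + q)"
  unfolding poly_in_def by (meson Un_iff keys_add subsetD)
lemma poly_in_mult [simp]: "poly_in V p \<Longrightarrow> poly_in V q \<Longrightarrow> poly_in V (p * q)"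
  unfolding poly_in_def
proof
  fix m assume a: "\<forall>m\<in>ks p. ks m \<subseteq> V" "\<forall>m\<in>ks q. ks m \<subseteq> V" "m \<in> ks (p * q)"
  then obtain a b where "m = a + b" "a \<in> ks p" "b \<in> ks q" using keys_mult by blast
  then show "ks m \<subseteq> V" using a keys_add[of a b] by blast
qed
lemma poly_in_uminus [simp]: "poly_in V p \<Longrightarrow> poly_in V (- p)"
  by (simp add: poly_in_def keys_minus)
lemma poly_in_diff [simp]: "poly_in V p \<Longrightarrow> poly_in V q \<Longrightarrow> poly_in V (p - q)"
  by (metis diff_conv_add_uminus poly_in_add poly_in_uminus)
lemma poly_in_sum [simp]: "(\<And>x. x \<in> A \<Longrightarrow> poly_in V (f x)) \<Longrightarrow> poly_in V (sum f A)"
  by (induction A rule: infinite_finite_induct) auto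
lemma poly_in_prod [simp]: "(\<And>x. x \<in> A \<Longrightarrow> poly_in V (f x)) \<Longrightarrow> poly_in V (prod f A)"
  by (induction A rule: infinite_finite_induct) auto
lemma poly_in_power [simp]: "poly_in V p \<Longrightarrow> poly_in V (p ^ k)"
  by (induction k) auto
lemma poly_in_mono: "poly_in V p \<Longrightarrow> V \<subseteq> U \<Longrightarrow> poly_in U p"
  by (auto simp: poly_in_def)
lemma poly_in_UNIV [simp]: "poly_in UNIV p" by (simp add: poly_in_def)

lemma mpoly_induct [consumes 1, case_names Const Var add mult]:
  assumes "poly_in V p"
    and C: "\<And>c. P (Const c)" and Vr: "\<And>j. j \<in> V \<Longrightarrow> P (Var j)"
    and A: "\<And>p q. P p \<Longrightarrow> P q \<Longrightarrow> P (p + q)"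
    and M: "\<And>p q. P p \<Longrightarrow> P q \<Longrightarrow> P (p * q)"
  shows "P p"
proof -
  have S: "P (sum f K)" if "\<And>x. x \<in> K \<Longrightarrow> P (f x)" for f and K :: "'z set"
    using that by (induction K rule: infinite_finite_induct) (auto intro: A simp: C[of 0, simplified])
  have Pr: "P (prod f K)" if "\<And>x. x \<in> K \<Longrightarrow> P (f x)" for f and K :: "'z set"
    using that by (induction K rule: infinite_finite_induct) (auto intro: M simp: C[of 1, simplified])
  have Pw: "P (q ^ k)" if "P q" for q k
    using that by (induction k) (auto intro: M simp: C[of 1, simplified])
  have "p = subst Var p" by simp
  also have "\<dots> = (\<Sum>m\<in>ks p. Const (lk p m) * (\<Prod>i\<in>ks m. Var i ^ lk m i))"
    by (simp add: subst_def)
  finally have e: "p = \<dots>" .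
  show ?thesis
    apply (subst e)
    apply (rule S)
    apply (rule M[OF C])
    apply (rule Pr)
    apply (rule Pw)
    apply (rule Vr)
    using assms(1) unfolding poly_in_def by blast
qed

lemma subst_cong: "poly_in V p \<Longrightarrow> (\<And>i. i \<in> V \<Longrightarrow> \<sigma> i = \<tau> i) \<Longrightarrow> subst \<sigma> p = subst \<tau> p"
  unfolding subst_def poly_in_def
  by (intro sum.cong refl arg_cong2[where f="(*)"] prod.cong) (auto simp: subset_iff)

lemma subst_comp: "subst \<tau> (subst \<sigma> p) = subst (\<lambda>i. subst \<tau> (\<sigma> i)) p"
  using poly_in_UNIV[of p] by (induction rule: mpoly_induct) auto

lemma poly_in_subst: "poly_in U p \<Longrightarrow> (\<And>i. i \<in> U \<Longrightarrow> poly_in V (\<sigma> i)) \<Longrightarrow> poly_in V (subst \<sigma> p)"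
  by (induction rule: mpoly_induct) auto




lemma lk_minus_nat: "lk (m - n) k = lk m k - lk (n :: 'a \<Rightarrow>\<^sub>0 nat) k"
  by (simp add: minus_poly_mapping.rep_eq)

definition dm :: "nat \<Rightarrow> (nat \<Rightarrow>\<^sub>0 nat) \<Rightarrow> mpoly" where
  "dm i m = sg (m - sg i 1) (of_nat (lk m i))"

lemma pd_lin: "pderiv_var i p = lin (dm i) p"
  by (simp add: pderiv_var_def lin_def dm_def Const_mult_single)

lemma dm_add: "dm i (m1 + m2) = dm i m1 * sg m2 1 + sg m1 1 * dm i m2"
proof -
  have e1: "m1 - sg i 1 + m2 = m1 + m2 - sg i 1" if "lk m1 i > 0"
    using that by (intro poly_mapping_eqI) (auto simp: lk_minus_nat lookup_add lookup_single when_def)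
  have e2: "m1 + (m2 - sg i 1) = m1 + m2 - sg i 1" if "lk m2 i > 0"
    using that by (intro poly_mapping_eqI) (auto simp: lk_minus_nat lookup_add lookup_single when_def)
  show ?thesis
    unfolding dm_def mult_single
    by (cases "lk m1 i = 0"; cases "lk m2 i = 0")
       (simp_all add: e1[simplified] e2[simplified] lookup_add single_add[symmetric])
qed

lemma pd_add [simp]: "pderiv_var i (p + q) = pderiv_var i p + pderiv_var i q"
  by (simp add: pd_lin lin_add)
lemma pd_mult [simp]: "pderiv_var i (p * q) = pderiv_var i p * q + p * pderiv_var i q"
  by (simp add: pd_lin lin_deriv dm_add)
lemma pd_zero [simp]: "pderiv_var i 0 = 0" by (simp add: pd_lin)
lemma pd_Const [simp]: "pderiv_var i (Const c) = 0"
  by (simp add: pd_lin Const_def dm_def)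
lemma pd_Var: "pderiv_var i (Var j) = (if i = j then 1 else 0)"
  by (simp add: pd_lin Var_def dm_def lookup_single)
lemma pd_sum: "pderiv_var i (sum f A) = (\<Sum>x\<in>A. pderiv_var i (f x))"
  by (induction A rule: infinite_finite_induct) auto
lemma pd_Const_mult [simp]: "pderiv_var i (Const c * p) = Const c * pderiv_var i p"
  by simp
lemma pd_uminus [simp]: "pderiv_var i (- p) = - pderiv_var i p"
  by (metis add_eq_0_iff2 add.right_inverse pd_add pd_zero)
lemma pd_diff [simp]: "pderiv_var i (p - q) = pderiv_var i p - pderiv_var i q"
  by (metis diff_conv_add_uminus pd_add pd_uminus)

lemma poly_in_pd: "poly_in V p \<Longrightarrow> poly_in V (pderiv_var i p)"
proof -
  assume "poly_in V p"
  then have "poly_in V p \<and> poly_in V (pderiv_var i p)"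
    by (induction rule: mpoly_induct) (auto simp: pd_Var)
  then show ?thesis by simp
qed

lemma mult_if_1: "x * (if P then 1 else 0) = (if P then x else (0::'a::semiring_1))"
  by simp

lemma chain_rule:
  assumes "finite V" "poly_in V p"
  shows "pderiv_var k (subst \<sigma> p) = (\<Sum>j\<in>V. pderiv_var k (\<sigma> j) * subst \<sigma> (pderiv_var j p))"
  using assms(2)
proof (induction rule: mpoly_induct)
  case (Const c) then show ?case by simp
next
  case (Var j)
  then show ?case using assms(1)
    by (simp add: pd_Var if_distrib[of "subst \<sigma>"] mult_if_1 cong: if_cong)
next
  case (add p q) then show ?case by (simp add: distrib_left sum.distrib)
next
  case (mult p q) then show ?case
    by (simp add: distrib_left distrib_right sum.distrib sum_distrib_left sum_distrib_right ac_simps)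
qed

lemma pd_lincomb: "k \<in> S \<Longrightarrow> finite S \<Longrightarrow>
  pderiv_var k (\<Sum>j\<in>S. Const (a j) * Var j) = Const (a k)"
  by (simp add: pd_sum pd_Var if_distrib cong: if_cong)




lemma mmul_assoc: "finite S \<Longrightarrow> mmul S (mmul S A B) C = mmul S A (mmul S B C)"
  unfolding mmul_def
proof (intro ext)
  fix i k assume fin: "finite S"
  show "(if i \<in> S \<and> k \<in> S then \<Sum>j\<in>S. (if i \<in> S \<and> j \<in> S then \<Sum>l\<in>S. A i l * B l j else 0) * C j k else 0) =
        (if i \<in> S \<and> k \<in> S then \<Sum>j\<in>S. A i j * (if j \<in> S \<and> k \<in> S then \<Sum>l\<in>S. B j l * C l k else 0) else 0)"
  proof (cases "i \<in> S \<and> k \<in> S")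
    case True
    have "(\<Sum>j\<in>S. (\<Sum>l\<in>S. A i l * B l j) * C j k) = (\<Sum>j\<in>S. \<Sum>l\<in>S. A i l * B l j * C j k)"
      by (simp add: sum_distrib_right)
    also have "\<dots> = (\<Sum>l\<in>S. \<Sum>j\<in>S. A i l * B l j * C j k)" by (rule sum.swap)
    also have "\<dots> = (\<Sum>l\<in>S. A i l * (\<Sum>j\<in>S. B l j * C j k))"
      by (simp add: sum_distrib_left mult.assoc)
    finally have M: "(\<Sum>j\<in>S. (\<Sum>l\<in>S. A i l * B l j) * C j k) = (\<Sum>j\<in>S. A i j * (\<Sum>l\<in>S. B j l * C l k))" .
    have L: "(\<Sum>j\<in>S. (if i \<in> S \<and> j \<in> S then \<Sum>l\<in>S. A i l * B l j else 0) * C j k) = (\<Sum>j\<in>S. (\<Sum>l\<in>S. A i l * B l j) * C j k)"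
      using True by (intro sum.cong) auto
    have R: "(\<Sum>j\<in>S. A i j * (if j \<in> S \<and> k \<in> S then \<Sum>l\<in>S. B j l * C l k else 0)) = (\<Sum>j\<in>S. A i j * (\<Sum>l\<in>S. B j l * C l k))"
      using True by (intro sum.cong) auto
    show ?thesis using True L R M by simp
  next
    case False
    show ?thesis by (simp only: if_not_P[OF False])
  qed
qed

lemma supported_mmul [simp]: "supported S (mmul S A B)"
  by (simp add: supported_def mmul_def)
lemma supported_idm [simp]: "supported S (idm S)"
  by (simp add: supported_def idm_def)

lemma mmul_idm_left: "finite S \<Longrightarrow> supported S A \<Longrightarrow> mmul S (idm S) A = A"
  unfolding mmul_def idm_def supported_def
  by (intro ext) (auto simp: if_distrib[of "\<lambda>x. x * _"] cong: if_cong)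
lemma mmul_idm_right: "finite S \<Longrightarrow> supported S A \<Longrightarrow> mmul S A (idm S) = A"
  unfolding mmul_def idm_def supported_def
  by (intro ext) (auto simp: mult_if_1 cong: if_cong)

definition diagm :: "nat set \<Rightarrow> (nat \<Rightarrow> complex) \<Rightarrow> cmat" where
  "diagm S f = (\<lambda>i j. if i \<in> S \<and> i = j then f i else 0)"

lemma supported_diagm [simp]: "supported S (diagm S f)"
  by (simp add: supported_def diagm_def)

lemma mmul_diag_right: "finite S \<Longrightarrow> i \<in> S \<Longrightarrow> k \<in> S \<Longrightarrow> mmul S A (diagm S f) i k = A i k * f k"
  unfolding mmul_def diagm_def by (simp add: if_distrib[of "\<lambda>x. _ * x"] cong: if_cong)
lemma mmul_diag_left: "finite S \<Longrightarrow> i \<in> S \<Longrightarrow> k \<in> S \<Longrightarrow> mmul S (diagm S f) A i k = f i * A i k"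
  unfolding mmul_def diagm_def by (simp add: if_distrib[of "\<lambda>x. x * _"] cong: if_cong)

definition blk :: "nat set \<Rightarrow> (nat \<Rightarrow> complex) \<Rightarrow> cmat \<Rightarrow> bool" where
  "blk S f A \<longleftrightarrow> (\<forall>i\<in>S. \<forall>j\<in>S. f i \<noteq> f j \<longrightarrow> A i j = 0)"

lemma blk_iff_comm:
  assumes "finite S" "supported S A"
  shows "blk S f A \<longleftrightarrow> mmul S A (diagm S f) = mmul S (diagm S f) A"
proof
  assume b: "blk S f A"
  show "mmul S A (diagm S f) = mmul S (diagm S f) A"
  proof (intro ext)
    fix i k
    show "mmul S A (diagm S f) i k = mmul S (diagm S f) A i k"
      using b assms by (cases "i \<in> S \<and> k \<in> S")
        (auto simp: mmul_diag_right mmul_diag_left blk_def, auto simp: mmul_def)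
  qed
next
  assume c: "mmul S A (diagm S f) = mmul S (diagm S f) A"
  show "blk S f A" unfolding blk_def
  proof (intro ballI impI)
    fix i j assume ij: "i \<in> S" "j \<in> S" "f i \<noteq> f j"
    have "A i j * f j = f i * A i j"
      using fun_cong[OF fun_cong[OF c, of i], of j] ij assms by (simp add: mmul_diag_right mmul_diag_left)
    then have "A i j * (f j - f i) = 0" by (simp add: algebra_simps)
    then show "A i j = 0" using ij by simp
  qed
qed

lemma blk_mmul:
  assumes "finite S" "supported S A" "supported S B" "blk S f A" "blk S f B"
  shows "blk S f (mmul S A B)"
proof -
  let ?D = "diagm S f"
  have cA: "mmul S A ?D = mmul S ?D A" and cB: "mmul S B ?D = mmul S ?D B"
    using assms blk_iff_comm by blast+
  have "mmul S (mmul S A B) ?D = mmul S A (mmul S ?D B)" using assms(1) cB by (simp add: mmul_assoc)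
  also have "\<dots> = mmul S (mmul S ?D A) B" using assms(1) cA by (simp add: mmul_assoc[symmetric])
  also have "\<dots> = mmul S ?D (mmul S A B)" using assms(1) by (simp add: mmul_assoc)
  finally show ?thesis using blk_iff_comm[OF assms(1)] by simp
qed

lemma comm_inverse:
  assumes S: "finite S" and sA: "supported S A" and sB: "supported S B" and sD: "supported S D"
    and AB: "mmul S A B = idm S" and BA: "mmul S B A = idm S"
    and c: "mmul S A D = mmul S D A"
  shows "mmul S B D = mmul S D B"
proof -
  have "mmul S B D = mmul S (mmul S B D) (mmul S A B)" using S AB by (simp add: mmul_idm_right)
  also have "\<dots> = mmul S B (mmul S (mmul S D A) B)" using S by (simp add: mmul_assoc)
  also have "\<dots> = mmul S B (mmul S (mmul S A D) B)" using c by simp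
  also have "\<dots> = mmul S (mmul S B A) (mmul S D B)" using S by (simp add: mmul_assoc)
  also have "\<dots> = mmul S D B" using S BA by (simp add: mmul_idm_left)
  finally show ?thesis .
qed

lemma blk_inverse:
  assumes "finite S" "supported S A" "supported S B"
    "mmul S A B = idm S" "mmul S B A = idm S" "blk S f A"
  shows "blk S f B"
  using assms comm_inverse[OF assms(1-3) supported_diagm assms(4,5)] blk_iff_comm by blast

definition lv :: "nat set \<Rightarrow> cmat \<Rightarrow> nat \<Rightarrow> mpoly" where
  "lv S g i = (if i \<in> S then (\<Sum>j\<in>S. Const (g i j) * Var j) else Var i)"

lemma act_lv: "act S g f = subst (lv S g) f"
  by (simp add: act_def lv_def[abs_def])

lemma act_act: "finite S \<Longrightarrow> act S A (act S B f) = act S (mmul S B A) f"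
  unfolding act_lv subst_comp
proof (intro arg_cong2[where f=subst] refl ext)
  fix i assume S: "finite S"
  show "subst (lv S A) (lv S B i) = lv S (mmul S B A) i"
  proof (cases "i \<in> S")
    case True
    have "subst (lv S A) (lv S B i) = (\<Sum>j\<in>S. Const (B i j) * (\<Sum>k\<in>S. Const (A j k) * Var k))"
      using True by (simp add: lv_def subst_sum)
    also have "\<dots> = (\<Sum>j\<in>S. \<Sum>k\<in>S. Const (B i j * A j k) * Var k)"
      by (simp add: sum_distrib_left Const_mult mult.assoc)
    also have "\<dots> = (\<Sum>k\<in>S. \<Sum>j\<in>S. Const (B i j * A j k) * Var k)" by (rule sum.swap)
    also have "\<dots> = (\<Sum>k\<in>S. Const (\<Sum>j\<in>S. B i j * A j k) * Var k)"
      by (simp add: Const_sum sum_distrib_right)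
    also have "\<dots> = lv S (mmul S B A) i" using True by (simp add: lv_def mmul_def)
    finally show ?thesis .
  qed (simp add: lv_def)
qed

lemma lv_idm: "finite S \<Longrightarrow> lv S (idm S) = Var"
  by (intro ext) (simp add: lv_def idm_def if_distrib[of Const] if_distrib[of "\<lambda>x. x * _"] cong: if_cong)

lemma act_idm [simp]: "finite S \<Longrightarrow> act S (idm S) f = f"
  by (simp add: act_lv lv_idm)

lemma poly_in_lv: "i \<in> S \<Longrightarrow> poly_in S (lv S g i)"
  by (simp add: lv_def)

lemma poly_in_act: "poly_in S f \<Longrightarrow> poly_in S (act S g f)"
  unfolding act_lv by (rule poly_in_subst) (auto intro: poly_in_lv)




lemma wb_blk: "(\<forall>i\<in>S. \<forall>j\<in>S. w i \<noteq> w j \<longrightarrow> g i j = 0) \<longleftrightarrow> blk S (\<lambda>i. of_nat (w i)) g"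
  by (simp add: blk_def)

lemma GLsetD: "A \<in> GLset S \<Longrightarrow> supported S A"
  by (simp add: GLset_def)

lemma sym_setD:
  assumes "A \<in> sym_set S w W"
  shows "supported S A" "act S A W = W" "blk S (\<lambda>i. of_nat (w i)) A"
    "\<exists>B. supported S B \<and> mmul S A B = idm S \<and> mmul S B A = idm S"
  using assms by (auto simp: sym_set_def GLset_def blk_def)

lemma sym_setI:
  assumes "supported S A" "supported S B" "mmul S A B = idm S" "mmul S B A = idm S"
    "act S A W = W" "blk S (\<lambda>i. of_nat (w i)) A"
  shows "A \<in> sym_set S w W"
  using assms by (auto simp: sym_set_def GLset_def blk_def)

lemma blk_idm [simp]: "blk S f (idm S)" by (simp add: blk_def idm_def)

lemma group_sym:
  assumes S: "finite S"
  shows "group (sym_group S w W)"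
proof (rule groupI)
  fix x y assume x: "x \<in> carrier (sym_group S w W)" and y: "y \<in> carrier (sym_group S w W)"
  obtain xi where xi: "supported S xi" "mmul S x xi = idm S" "mmul S xi x = idm S"
    using sym_setD(4)[of x S w W] x by (auto simp: sym_group_def)
  obtain yi where yi: "supported S yi" "mmul S y yi = idm S" "mmul S yi y = idm S"
    using sym_setD(4)[of y S w W] y by (auto simp: sym_group_def)
  have sx: "supported S x" "act S x W = W" "blk S (\<lambda>i. of_nat (w i)) x"
    using x sym_setD by (auto simp: sym_group_def)
  have sy: "supported S y" "act S y W = W" "blk S (\<lambda>i. of_nat (w i)) y"
    using y sym_setD by (auto simp: sym_group_def)
  have "mmul S (mmul S x y) (mmul S yi xi) = mmul S x (mmul S (mmul S y yi) xi)"
    using S by (simp add: mmul_assoc)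
  also have "\<dots> = idm S" using yi(2) xi(1,2) S by (simp add: mmul_idm_left)
  finally have i1: "mmul S (mmul S x y) (mmul S yi xi) = idm S" .
  have "mmul S (mmul S yi xi) (mmul S x y) = mmul S yi (mmul S (mmul S xi x) y)"
    using S by (simp add: mmul_assoc)
  also have "\<dots> = idm S" using yi(3) xi(3) sy(1) S by (simp add: mmul_idm_left)
  finally have i2: "mmul S (mmul S yi xi) (mmul S x y) = idm S" .
  note i1 i2
  moreover have "act S (mmul S x y) W = W"
    using act_act[OF S, of y x W] sx sy by simp
  moreover have "blk S (\<lambda>i. of_nat (w i)) (mmul S x y)"
    using blk_mmul S sx sy by blast
  ultimately show "x \<otimes>\<^bsub>sym_group S w W\<^esub> y \<in> carrier (sym_group S w W)"
    by (auto simp: sym_group_def intro!: sym_setI[of S _ "mmul S yi xi"])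
next
  show "\<one>\<^bsub>sym_group S w W\<^esub> \<in> carrier (sym_group S w W)"
    using S by (auto simp: sym_group_def mmul_idm_left intro!: sym_setI[of S _ "idm S"])
next
  fix x y z assume "x \<in> carrier (sym_group S w W)"
  then show "x \<otimes>\<^bsub>sym_group S w W\<^esub> y \<otimes>\<^bsub>sym_group S w W\<^esub> z =
             x \<otimes>\<^bsub>sym_group S w W\<^esub> (y \<otimes>\<^bsub>sym_group S w W\<^esub> z)"
    using S by (simp add: sym_group_def mmul_assoc)
next
  fix x assume "x \<in> carrier (sym_group S w W)"
  then show "\<one>\<^bsub>sym_group S w W\<^esub> \<otimes>\<^bsub>sym_group S w W\<^esub> x = x"
    using S sym_setD(1) by (simp add: sym_group_def mmul_idm_left)
next
  fix x assume x: "x \<in> carrier (sym_group S w W)"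
  obtain xi where xi: "supported S xi" "mmul S x xi = idm S" "mmul S xi x = idm S"
    using sym_setD(4)[of x S w W] x by (auto simp: sym_group_def)
  have sx: "supported S x" "act S x W = W" "blk S (\<lambda>i. of_nat (w i)) x"
    using x sym_setD by (auto simp: sym_group_def)
  have "act S xi W = W"
    using act_act[OF S, of xi x W] sx xi S by simp
  moreover have "blk S (\<lambda>i. of_nat (w i)) xi"
    using blk_inverse[OF S sx(1) xi] sx(3) by blast
  ultimately have "xi \<in> sym_set S w W"
    using xi sx by (intro sym_setI[of S _ x]) auto
  then show "\<exists>y\<in>carrier (sym_group S w W). y \<otimes>\<^bsub>sym_group S w W\<^esub> x = \<one>\<^bsub>sym_group S w W\<^esub>"
    using xi by (auto simp: sym_group_def)
qed




locale L4 =
  fixes n :: nat and w :: "nat \<Rightarrow> nat" and d :: nat and W :: mpoly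
    and G :: "cmat set" and g P Q :: cmat and lam :: "nat \<Rightarrow> complex"
  assumes qh: "quasihomogeneous {..<n} w d W"
    and nd: "nondegenerate {..<n} W"
    and Gfin: "finite G"
    and Gsub: "subgroup G (sym_group {..<n} w W)"
    and gG: "g \<in> G"
    and P: "P \<in> GLset {..<n}" and Q: "Q \<in> GLset {..<n}"
    and PQ: "mmul {..<n} P Q = idm {..<n}" and QP: "mmul {..<n} Q P = idm {..<n}"
    and Pw: "\<forall>i<n. \<forall>j<n. w i \<noteq> w j \<longrightarrow> P i j = 0"
    and eig: "\<forall>i<n. \<forall>k<n. mmul {..<n} P g i k = lam i * P i k"
begin

abbreviation "N \<equiv> {..<n}"
definition "I = {i. i < n \<and> lam i = 1}"
definition "W' = act N Q W"
definition "\<pi> = (\<lambda>i. if i \<in> I then Var i else (0::mpoly))"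
definition "Wg = subst \<pi> W'"
definition "cj h = mmul N (mmul N P h) Q"
definition "res h = (\<lambda>i j. if i \<in> I \<and> j \<in> I then cj h i j else 0)"
definition "C = {h \<in> G. mmul N h g = mmul N g h}"
abbreviation "SG \<equiv> sym_group N w W"
abbreviation "wt \<equiv> (\<lambda>i. complex_of_nat (w i))"

lemma finN: "finite N" by simp
lemma finI: "finite I" by (simp add: I_def)
lemma IN: "I \<subseteq> N" by (auto simp: I_def)

lemma sP: "supported N P" using P by (simp add: GLsetD)
lemma sQ: "supported N Q" using Q by (simp add: GLsetD)
lemma GS: "G \<subseteq> sym_set N w W"
  using subgroup.subset[OF Gsub] by (simp add: sym_group_def)
lemma grp: "group SG" by (rule group_sym) simp

lemma hS: "h \<in> G \<Longrightarrow> supported N h" "h \<in> G \<Longrightarrow> act N h W = W" "h \<in> G \<Longrightarrow> blk N wt h"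
  using GS sym_setD by blast+

lemma WN: "poly_in N W" using qh by (simp add: quasihomogeneous_def)
lemma W'N: "poly_in N W'" unfolding W'_def by (rule poly_in_act[OF WN])

lemma Pblk: "blk N wt P" using Pw by (simp add: blk_def)
lemma Qblk: "blk N wt Q" by (rule blk_inverse[OF finN sP sQ PQ QP Pblk])

abbreviation "\<Lambda> \<equiv> diagm N lam"

lemma PgL: "mmul N P g = mmul N \<Lambda> P"
proof (intro ext)
  fix i k show "mmul N P g i k = mmul N \<Lambda> P i k"
    using eig by (cases "i \<in> N \<and> k \<in> N") (auto simp: mmul_diag_left, auto simp: mmul_def)
qed

lemma cj_mult: "supported N h \<Longrightarrow> mmul N (cj h) (cj k) = cj (mmul N h k)"
proof -
  assume sh: "supported N h"
  have "mmul N (cj h) (cj k) = mmul N (mmul N P h) (mmul N (mmul N Q P) (mmul N k Q))"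
    unfolding cj_def by (simp add: mmul_assoc)
  also have "\<dots> = cj (mmul N h k)" unfolding QP cj_def
    by (simp add: mmul_idm_left mmul_assoc)
  finally show ?thesis .
qed

lemma cj_idm: "cj (idm N) = idm N"
  unfolding cj_def using sP by (simp add: mmul_idm_right PQ)

lemma cjg: "cj g = \<Lambda>"
  unfolding cj_def PgL by (simp add: mmul_assoc PQ mmul_idm_right)

lemma cj_blk_lam: "h \<in> C \<Longrightarrow> blk N lam (cj h)"
proof -
  assume h: "h \<in> C"
  then have hG: "h \<in> G" and c: "mmul N h g = mmul N g h" by (auto simp: C_def)
  have "mmul N (cj h) \<Lambda> = mmul N \<Lambda> (cj h)"
    unfolding cjg[symmetric] using hS(1)[OF hG] hS(1)[OF gG] by (simp add: cj_mult c)
  then show ?thesis using blk_iff_comm[OF finN] unfolding cj_def by simp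
qed

lemma cj_blk_w: "h \<in> G \<Longrightarrow> blk N wt (cj h)"
  unfolding cj_def using hS[of h] Pblk Qblk sP sQ by (intro blk_mmul) auto

lemma act_cj: "h \<in> G \<Longrightarrow> act N (cj h) W' = W'"
proof -
  assume hG: "h \<in> G"
  have "mmul N Q (cj h) = mmul N h Q"
    unfolding cj_def by (simp add: mmul_assoc[symmetric] QP mmul_idm_left hS(1)[OF hG])
  then have "act N (cj h) W' = act N (mmul N h Q) W" by (simp add: W'_def act_act)
  also have "\<dots> = W'" by (simp add: act_act[symmetric] hS(2)[OF hG] W'_def)
  finally show ?thesis .
qed

end



context L4 begin

lemma pi_I: "poly_in I (\<pi> i)" by (simp add: \<pi>_def)

lemma poly_in_Wg: "poly_in I Wg"
  unfolding Wg_def by (rule poly_in_subst[OF W'N]) (rule pi_I)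

lemma qh_Wg: "quasihomogeneous I w d Wg"
proof -
  have wpos: "\<forall>i\<in>N. w i > 0" and dpos: "d > 0"
    and sc: "\<And>t::complex. subst (\<lambda>i. if i \<in> N then Const (t ^ w i) * Var i else Var i) W = Const (t ^ d) * W"
    using qh by (auto simp: quasihomogeneous_def)
  have "subst (\<lambda>i. if i \<in> I then Const (t ^ w i) * Var i else Var i) Wg = Const (t ^ d) * Wg" for t :: complex
  proof -
    let ?sI = "(\<lambda>i. if i \<in> I then Const (t ^ w i) * Var i else Var i)"
    let ?sN = "(\<lambda>i. if i \<in> N then Const (t ^ w i) * Var i else Var i)"
    have "subst ?sI Wg = subst (\<lambda>i. subst ?sI (subst \<pi> (lv N Q i))) W"
      unfolding Wg_def W'_def act_lv subst_comp ..
    also have "\<dots> = subst (\<lambda>i. subst \<pi> (subst (lv N Q) (?sN i))) W"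
    proof (rule subst_cong[OF WN])
      fix i assume i: "i \<in> N"
      have "subst ?sI (subst \<pi> (lv N Q i)) = (\<Sum>j\<in>N. Const (Q i j) * (if j \<in> I then Const (t ^ w j) * Var j else 0))"
        using i by (simp add: lv_def subst_sum \<pi>_def if_distrib[of "subst _"] cong: if_cong)
      also have "\<dots> = (\<Sum>j\<in>N. Const (t ^ w i) * (Const (Q i j) * (if j \<in> I then Var j else 0)))"
      proof (rule sum.cong[OF refl])
        fix j assume j: "j \<in> N"
        show "Const (Q i j) * (if j \<in> I then Const (t ^ w j) * Var j else 0) =
              Const (t ^ w i) * (Const (Q i j) * (if j \<in> I then Var j else 0))"
          using Qblk i j by (cases "w i = w j") (auto simp: blk_def)
      qed
      also have "\<dots> = subst \<pi> (subst (lv N Q) (?sN i))"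
        using i by (simp add: lv_def subst_sum sum_distrib_left \<pi>_def)
      finally show "subst ?sI (subst \<pi> (lv N Q i)) = subst \<pi> (subst (lv N Q) (?sN i))" .
    qed
    also have "\<dots> = subst \<pi> (subst (lv N Q) (subst ?sN W))"
      by (simp add: subst_comp)
    also have "\<dots> = subst \<pi> (subst (lv N Q) (Const (t ^ d) * W))"
      by (simp only: sc)
    also have "\<dots> = Const (t ^ d) * Wg"
      by (simp add: Wg_def W'_def act_lv)
    finally show ?thesis .
  qed
  then show ?thesis using wpos dpos poly_in_Wg IN
    unfolding quasihomogeneous_def by auto
qed

lemma DW1: "k \<in> N \<Longrightarrow> pderiv_var k W' = (\<Sum>j\<in>N. Const (Q j k) * act N Q (pderiv_var j W))"
  unfolding W'_def act_lv
  by (subst chain_rule[OF finN WN]) (simp add: lv_def pd_lincomb)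

lemma DW2: "i \<in> N \<Longrightarrow> act N Q (pderiv_var i W) = (\<Sum>k\<in>N. Const (P k i) * pderiv_var k W')"
proof -
  assume i: "i \<in> N"
  let ?X = "\<lambda>j. act N Q (pderiv_var j W)"
  have "(\<Sum>k\<in>N. Const (P k i) * pderiv_var k W') = (\<Sum>k\<in>N. \<Sum>j\<in>N. Const (Q j k * P k i) * ?X j)"
    by (simp add: DW1 sum_distrib_left Const_mult ac_simps)
  also have "\<dots> = (\<Sum>j\<in>N. Const (\<Sum>k\<in>N. Q j k * P k i) * ?X j)"
    by (subst sum.swap) (simp add: Const_sum sum_distrib_right)
  also have "\<dots> = (\<Sum>j\<in>N. Const (idm N j i) * ?X j)"
    using i QP[unfolded mmul_def] by (intro sum.cong refl) (simp add: fun_eq_iff, metis)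
  also have "\<dots> = ?X i" using i by (simp add: idm_def if_distrib[of Const] if_distrib[of "\<lambda>x. x * _"] cong: if_cong)
  finally show ?thesis by simp
qed

lemma DW3: "k \<in> I \<Longrightarrow> subst \<pi> (pderiv_var k W') = pderiv_var k Wg"
proof -
  assume k: "k \<in> I"
  have "pderiv_var k Wg = (\<Sum>j\<in>N. pderiv_var k (\<pi> j) * subst \<pi> (pderiv_var j W'))"
    unfolding Wg_def by (rule chain_rule[OF finN W'N])
  also have "\<dots> = (\<Sum>j\<in>N. if j = k then subst \<pi> (pderiv_var j W') else 0)"
    using k by (intro sum.cong refl) (auto simp: \<pi>_def pd_Var)
  also have "\<dots> = subst \<pi> (pderiv_var k W')" using k IN by auto
  finally show ?thesis by simp
qed

lemma pi_act_Lambda: "poly_in N f \<Longrightarrow> subst \<pi> (act N \<Lambda> f) = subst \<pi> f"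
  unfolding act_lv subst_comp
proof (rule subst_cong)
  fix j assume "poly_in N f" "j \<in> N"
  then have "subst \<pi> (lv N \<Lambda> j) = (\<Sum>l\<in>N. Const (\<Lambda> j l) * \<pi> l)" by (simp add: lv_def subst_sum)
  also have "\<dots> = Const (lam j) * \<pi> j" using \<open>j \<in> N\<close>
    by (simp add: diagm_def if_distrib[of Const] if_distrib[of "\<lambda>x. x * _"] cong: if_cong)
  also have "\<dots> = \<pi> j" by (auto simp: \<pi>_def I_def)
  finally show "subst \<pi> (lv N \<Lambda> j) = \<pi> j" .
qed

lemma DW4: "k \<in> N \<Longrightarrow> k \<notin> I \<Longrightarrow> subst \<pi> (pderiv_var k W') = 0"
proof -
  assume k: "k \<in> N" "k \<notin> I"
  have aL: "act N \<Lambda> W' = W'" using act_cj[OF gG] cjg by simp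
  have "pderiv_var k W' = pderiv_var k (act N \<Lambda> W')" using aL by simp
  also have "\<dots> = (\<Sum>j\<in>N. pderiv_var k (lv N \<Lambda> j) * act N \<Lambda> (pderiv_var j W'))"
    unfolding act_lv by (rule chain_rule[OF finN W'N])
  also have "\<dots> = (\<Sum>j\<in>N. if j = k then Const (lam k) * act N \<Lambda> (pderiv_var j W') else 0)"
    using k by (intro sum.cong refl) (auto simp: lv_def pd_lincomb diagm_def)
  also have "\<dots> = Const (lam k) * act N \<Lambda> (pderiv_var k W')" using k by simp
  finally have e: "pderiv_var k W' = Const (lam k) * act N \<Lambda> (pderiv_var k W')" .
  have "subst \<pi> (pderiv_var k W') = Const (lam k) * subst \<pi> (pderiv_var k W')"
    by (subst e) (simp add: pi_act_Lambda poly_in_pd[OF W'N])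
  then have "Const (1 - lam k) * subst \<pi> (pderiv_var k W') = 0"
    by (simp add: Const_diff algebra_simps)
  moreover have "1 - lam k \<noteq> 0" using k by (auto simp: I_def)
  ultimately show ?thesis using Const_mult_eq_0 by blast
qed

end



context L4 begin

definition "\<Phi> f = subst \<pi> (act N Q f)"

lemma Phi_in: "poly_in I (\<Phi> f)"
  unfolding \<Phi>_def by (rule poly_in_subst[OF poly_in_UNIV]) (rule pi_I)

lemma Phi_add [simp]: "\<Phi> (f + h) = \<Phi> f + \<Phi> h" by (simp add: \<Phi>_def act_lv)
lemma Phi_mult [simp]: "\<Phi> (f * h) = \<Phi> f * \<Phi> h" by (simp add: \<Phi>_def act_lv)
lemma Phi_diff [simp]: "\<Phi> (f - h) = \<Phi> f - \<Phi> h" by (simp add: \<Phi>_def act_lv)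
lemma Phi_Const [simp]: "\<Phi> (Const c) = Const c" by (simp add: \<Phi>_def act_lv)
lemma Phi_sum: "\<Phi> (sum f A) = (\<Sum>x\<in>A. \<Phi> (f x))" by (simp add: \<Phi>_def act_lv subst_sum)

lemma Phi_D: "i \<in> N \<Longrightarrow> \<Phi> (pderiv_var i W) = (\<Sum>k\<in>I. Const (P k i) * pderiv_var k Wg)"
proof -
  assume i: "i \<in> N"
  have "\<Phi> (pderiv_var i W) = (\<Sum>k\<in>N. Const (P k i) * subst \<pi> (pderiv_var k W'))"
    unfolding \<Phi>_def DW2[OF i] by (simp add: subst_sum)
  also have "\<dots> = (\<Sum>k\<in>I. Const (P k i) * subst \<pi> (pderiv_var k W'))"
    using IN by (intro sum.mono_neutral_right) (auto simp: DW4)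
  also have "\<dots> = (\<Sum>k\<in>I. Const (P k i) * pderiv_var k Wg)"
    by (intro sum.cong refl) (simp add: DW3)
  finally show ?thesis .
qed

lemma Phi_id: "poly_in I p \<Longrightarrow> \<Phi> (act N P p) = p"
proof -
  assume p: "poly_in I p"
  have "\<Phi> (act N P p) = subst \<pi> p" unfolding \<Phi>_def by (simp add: act_act PQ)
  also have "\<dots> = subst Var p" by (rule subst_cong[OF p]) (simp add: \<pi>_def)
  finally show ?thesis by simp
qed

lemma nd_Wg: "nondegenerate I Wg"
proof -
  from nd[unfolded nondegenerate_def] obtain B where B: "finite B" "B \<subseteq> {p. poly_in N p}"
    and sp: "\<forall>p. poly_in N p \<longrightarrow> (\<exists>c. p - (\<Sum>b\<in>B. Const (c b) * b) \<in> jacobian_ideal N W)"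
    by (elim exE conjE)
  let ?B = "\<Phi> ` B"
  have "\<exists>c. p - (\<Sum>b\<in>?B. Const (c b) * b) \<in> jacobian_ideal I Wg" if p: "poly_in I p" for p
  proof -
    have "poly_in N p" using p IN by (rule poly_in_mono)
    then have "poly_in N (act N P p)" by (rule poly_in_act)
    then obtain c where "act N P p - (\<Sum>b\<in>B. Const (c b) * b) \<in> jacobian_ideal N W"
      using sp by (elim allE impE exE)
    then obtain a where ca: "act N P p - (\<Sum>b\<in>B. Const (c b) * b) = (\<Sum>i\<in>N. a i * pderiv_var i W)"
      unfolding jacobian_ideal_def by auto
    have "p - (\<Sum>b\<in>B. Const (c b) * \<Phi> b) = \<Phi> (act N P p - (\<Sum>b\<in>B. Const (c b) * b))"
      using p by (simp add: Phi_sum Phi_id)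
    also have "\<dots> = (\<Sum>i\<in>N. \<Phi> (a i) * (\<Sum>k\<in>I. Const (P k i) * pderiv_var k Wg))"
      unfolding ca by (simp add: Phi_sum Phi_D)
    also have "\<dots> = (\<Sum>i\<in>N. \<Sum>k\<in>I. \<Phi> (a i) * Const (P k i) * pderiv_var k Wg)"
      by (simp add: sum_distrib_left mult.assoc)
    also have "\<dots> = (\<Sum>k\<in>I. \<Sum>i\<in>N. \<Phi> (a i) * Const (P k i) * pderiv_var k Wg)"
      by (rule sum.swap)
    also have "\<dots> = (\<Sum>k\<in>I. (\<Sum>i\<in>N. \<Phi> (a i) * Const (P k i)) * pderiv_var k Wg)"
      by (simp add: sum_distrib_right)
    finally have e1: "p - (\<Sum>b\<in>B. Const (c b) * \<Phi> b) = \<dots>" .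
    define c' where "c' y = (\<Sum>x\<in>{x\<in>B. \<Phi> x = y}. c x)" for y
    have "(\<Sum>b\<in>B. Const (c b) * \<Phi> b) = (\<Sum>y\<in>?B. \<Sum>x\<in>{x\<in>B. \<Phi> x = y}. Const (c x) * \<Phi> x)"
      by (rule sum.image_gen[OF B(1)])
    also have "\<dots> = (\<Sum>y\<in>?B. Const (c' y) * y)"
      unfolding c'_def Const_sum sum_distrib_right by (intro sum.cong refl) auto
    finally have e2: "(\<Sum>b\<in>B. Const (c b) * \<Phi> b) = (\<Sum>y\<in>?B. Const (c' y) * y)" .
    have "p - (\<Sum>y\<in>?B. Const (c' y) * y) \<in> jacobian_ideal I Wg"
    proof -
      have eq: "p - (\<Sum>y\<in>?B. Const (c' y) * y) = (\<Sum>k\<in>I. (\<Sum>i\<in>N. \<Phi> (a i) * Const (P k i)) * pderiv_var k Wg)"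
        using e1 e2 by simp
      show ?thesis unfolding jacobian_ideal_def mem_Collect_eq
        by (rule exI[of _ "\<lambda>k. \<Sum>i\<in>N. \<Phi> (a i) * Const (P k i)"]) (simp add: eq Phi_in)
    qed
    then show ?thesis by blast
  qed
  moreover have "finite ?B" using B by simp
  moreover have "?B \<subseteq> {p. poly_in I p}" using Phi_in by auto
  ultimately show ?thesis unfolding nondegenerate_def by blast
qed

end



lemma (in group) comm_inv_aux:
  assumes x: "x \<in> carrier G" and y: "y \<in> carrier G" and c: "x \<otimes> y = y \<otimes> x"
  shows "inv x \<otimes> y = y \<otimes> inv x"
proof -
  have "inv x \<otimes> y = inv x \<otimes> y \<otimes> (x \<otimes> inv x)" using x y by simp
  also have "\<dots> = inv x \<otimes> (x \<otimes> y) \<otimes> inv x" using x y c by (simp add: m_assoc)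
  also have "\<dots> = y \<otimes> inv x" using x y by (simp add: m_assoc[symmetric])
  finally show ?thesis .
qed

context L4 begin

lemma CG: "h \<in> C \<Longrightarrow> h \<in> G" by (simp add: C_def)

lemma cj_zero: "h \<in> C \<Longrightarrow> i \<in> I \<Longrightarrow> j \<in> N \<Longrightarrow> j \<notin> I \<Longrightarrow> cj h i j = 0"
  using cj_blk_lam[of h] IN by (auto simp: blk_def I_def)
lemma cj_zero': "h \<in> C \<Longrightarrow> i \<in> N \<Longrightarrow> i \<notin> I \<Longrightarrow> j \<in> I \<Longrightarrow> cj h i j = 0"
  using cj_blk_lam[of h] IN by (auto simp: blk_def I_def)

lemma res_mult: "h \<in> C \<Longrightarrow> mmul I (res h) (res k) = res (mmul N h k)"
proof (intro ext)
  fix i l assume h: "h \<in> C"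
  show "mmul I (res h) (res k) i l = res (mmul N h k) i l"
  proof (cases "i \<in> I \<and> l \<in> I")
    case True
    have "mmul I (res h) (res k) i l = (\<Sum>j\<in>I. cj h i j * cj k j l)"
      using True by (simp add: mmul_def res_def)
    also have "\<dots> = (\<Sum>j\<in>N. cj h i j * cj k j l)"
      using True IN h by (intro sum.mono_neutral_left) (auto simp: cj_zero)
    also have "\<dots> = mmul N (cj h) (cj k) i l" using True IN by (auto simp: mmul_def)
    also have "\<dots> = res (mmul N h k) i l"
      using True h hS(1)[OF CG[OF h]] by (simp add: cj_mult res_def)
    finally show ?thesis .
  qed (auto simp: mmul_def res_def)
qed

lemma res_idm: "res (idm N) = idm I"
proof -
  have "res (idm N) = (\<lambda>i j. if i \<in> I \<and> j \<in> I then idm N i j else 0)" unfolding res_def cj_idm ..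
  then show ?thesis using IN by (auto simp: idm_def fun_eq_iff)
qed

lemma C_mult: "h \<in> C \<Longrightarrow> k \<in> C \<Longrightarrow> mmul N h k \<in> C"
proof -
  assume h: "h \<in> C" and k: "k \<in> C"
  have "mmul N h k = h \<otimes>\<^bsub>SG\<^esub> k" by (simp add: sym_group_def)
  then have G: "mmul N h k \<in> G" using subgroup.m_closed[OF Gsub] h k by (simp add: C_def)
  have ch: "mmul N h g = mmul N g h" and ck: "mmul N k g = mmul N g k" using h k by (auto simp: C_def)
  have "mmul N (mmul N h k) g = mmul N h (mmul N k g)" by (simp add: mmul_assoc)
  also have "\<dots> = mmul N (mmul N h g) k" by (simp add: ck mmul_assoc)
  also have "\<dots> = mmul N g (mmul N h k)" by (simp add: ch mmul_assoc)
  finally have "mmul N (mmul N h k) g = mmul N g (mmul N h k)" .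
  then show ?thesis using G by (simp add: C_def)
qed

lemma C_inv:
  assumes h: "h \<in> C"
  shows "inv\<^bsub>SG\<^esub> h \<in> C" "mmul N h (inv\<^bsub>SG\<^esub> h) = idm N" "mmul N (inv\<^bsub>SG\<^esub> h) h = idm N"
proof -
  have hc: "h \<in> carrier SG" and gc: "g \<in> carrier SG"
    using GS CG[OF h] gG by (auto simp: sym_group_def)
  show "mmul N h (inv\<^bsub>SG\<^esub> h) = idm N" "mmul N (inv\<^bsub>SG\<^esub> h) h = idm N"
    using group.r_inv[OF grp hc] group.l_inv[OF grp hc] by (simp_all add: sym_group_def)
  have "h \<otimes>\<^bsub>SG\<^esub> g = g \<otimes>\<^bsub>SG\<^esub> h" using h by (simp add: C_def sym_group_def)
  then have "inv\<^bsub>SG\<^esub> h \<otimes>\<^bsub>SG\<^esub> g = g \<otimes>\<^bsub>SG\<^esub> inv\<^bsub>SG\<^esub> h"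
    using group.comm_inv_aux[OF grp hc gc] by simp
  moreover have "inv\<^bsub>SG\<^esub> h \<in> G" using subgroup.m_inv_closed[OF Gsub CG[OF h]] .
  ultimately show "inv\<^bsub>SG\<^esub> h \<in> C" by (simp add: C_def sym_group_def)
qed

lemma act_res: "h \<in> C \<Longrightarrow> act I (res h) Wg = Wg"
proof -
  assume h: "h \<in> C"
  let ?M = "cj h"
  have "act I (res h) Wg = subst (\<lambda>i. subst (lv I (res h)) (\<pi> i)) W'"
    unfolding Wg_def act_lv subst_comp ..
  also have "\<dots> = subst (\<lambda>i. subst \<pi> (lv N ?M i)) W'"
  proof (rule subst_cong[OF W'N])
    fix i assume i: "i \<in> N"
    have r: "subst \<pi> (lv N ?M i) = (\<Sum>j\<in>N. Const (?M i j) * \<pi> j)"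
      using i by (simp add: lv_def subst_sum)
    show "subst (lv I (res h)) (\<pi> i) = subst \<pi> (lv N ?M i)"
    proof (cases "i \<in> I")
      case True
      have "(\<Sum>j\<in>N. Const (?M i j) * \<pi> j) = (\<Sum>j\<in>I. Const (?M i j) * Var j)"
        using IN by (intro sum.mono_neutral_cong_right) (auto simp: \<pi>_def)
      then show ?thesis using True r by (simp add: \<pi>_def lv_def res_def)
    next
      case False
      have "(\<Sum>j\<in>N. Const (?M i j) * \<pi> j) = 0"
        using i False h by (intro sum.neutral) (auto simp: \<pi>_def cj_zero')
      then show ?thesis using False r by (simp add: \<pi>_def)
    qed
  qed
  also have "\<dots> = subst \<pi> (act N ?M W')" by (simp add: act_lv subst_comp)
  also have "\<dots> = Wg" using act_cj[OF CG[OF h]] by (simp add: Wg_def)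
  finally show ?thesis .
qed

lemma res_in: "h \<in> C \<Longrightarrow> res h \<in> sym_set I w Wg"
proof -
  assume h: "h \<in> C"
  let ?h' = "inv\<^bsub>SG\<^esub> h"
  show ?thesis
  proof (rule sym_setI[of I _ "res ?h'"])
    show "supported I (res h)" "supported I (res ?h')" by (auto simp: supported_def res_def)
    show "mmul I (res h) (res ?h') = idm I" using h C_inv[OF h] by (simp add: res_mult res_idm)
    show "mmul I (res ?h') (res h) = idm I" using h C_inv[OF h] by (simp add: res_mult res_idm)
    show "act I (res h) Wg = Wg" using act_res[OF h] .
    show "blk I wt (res h)" using cj_blk_w[OF CG[OF h]] IN by (auto simp: blk_def res_def)
  qed
qed

lemma sub: "subgroup (res ` C) (sym_group I w Wg)"
proof (rule subgroup.intro)
  show "res ` C \<subseteq> carrier (sym_group I w Wg)" using res_in by (auto simp: sym_group_def)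
next
  fix x y assume "x \<in> res ` C" "y \<in> res ` C"
  then obtain h k where "h \<in> C" "k \<in> C" "x = res h" "y = res k" by blast
  then show "x \<otimes>\<^bsub>sym_group I w Wg\<^esub> y \<in> res ` C"
    by (simp add: sym_group_def res_mult C_mult)
next
  have "idm N \<in> G" using subgroup.one_closed[OF Gsub] by (simp add: sym_group_def)
  then have "idm N \<in> C" using hS(1)[OF gG] by (simp add: C_def mmul_idm_left mmul_idm_right)
  then show "\<one>\<^bsub>sym_group I w Wg\<^esub> \<in> res ` C"
    by (metis (no_types) image_eqI monoid.select_convs(2) res_idm sym_group_def)
next
  fix x assume "x \<in> res ` C"
  then obtain h where h: "h \<in> C" "x = res h" by blast
  let ?h' = "inv\<^bsub>SG\<^esub> h"
  have "inv\<^bsub>sym_group I w Wg\<^esub> (res h) = res ?h'"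
  proof (rule group.inv_equality[OF group_sym[OF finI]])
    show "res ?h' \<otimes>\<^bsub>sym_group I w Wg\<^esub> res h = \<one>\<^bsub>sym_group I w Wg\<^esub>"
      using C_inv[OF h(1)] by (simp add: sym_group_def res_mult res_idm)
    show "res h \<in> carrier (sym_group I w Wg)" "res ?h' \<in> carrier (sym_group I w Wg)"
      using res_in h C_inv(1)[OF h(1)] by (auto simp: sym_group_def)
  qed
  then show "inv\<^bsub>sym_group I w Wg\<^esub> x \<in> res ` C" using h C_inv(1)[OF h(1)] by simp
qed

lemma main: "quasihomogeneous I w d Wg \<and> nondegenerate I Wg \<and> finite (res ` C) \<and> subgroup (res ` C) (sym_group I w Wg)"
  using qh_Wg nd_Wg sub Gfin by (simp add: C_def)

end

theorem lemma4p1: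
  fixes n :: nat and w :: "nat \<Rightarrow> nat" and d :: nat and W :: mpoly
    and G :: "cmat set" and g P Q :: cmat and lam :: "nat \<Rightarrow> complex"
  assumes qh: "quasihomogeneous {..<n} w d W"
    and nd: "nondegenerate {..<n} W"
    and Gfin: "finite G"
    and Gsub: "subgroup G (sym_group {..<n} w W)"
    and gG: "g \<in> G"
    \<comment> \<open>eigenbasis y_i = \<Sum>_j P_ij x_j of g with eigenvalues lam i, y_i of the same weight as x_i\<close>
    and P: "P \<in> GLset {..<n}" and Q: "Q \<in> GLset {..<n}"
    and PQ: "mmul {..<n} P Q = idm {..<n}" and QP: "mmul {..<n} Q P = idm {..<n}"
    and Pw: "\<forall>i<n. \<forall>j<n. w i \<noteq> w j \<longrightarrow> P i j = 0"
    and eig: "\<forall>i<n. \<forall>k<n. mmul {..<n} P g i k = lam i * P i k"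
    \<comment> \<open>n_g > 0\<close>
    and ng: "{i. i < n \<and> lam i = 1} \<noteq> {}"
  shows "let I = {i. i < n \<and> lam i = 1};
             W' = act {..<n} Q W;
             Wg = subst (\<lambda>i. if i \<in> I then Var i else 0) W';
             res = (\<lambda>h. \<lambda>i j. if i \<in> I \<and> j \<in> I
                      then mmul {..<n} (mmul {..<n} P h) Q i j else 0);
             C = {h \<in> G. mmul {..<n} h g = mmul {..<n} g h}
         in quasihomogeneous I w d Wg \<and> nondegenerate I Wg \<and>
            finite (res ` C) \<and> subgroup (res ` C) (sym_group I w Wg)"
proof -
  interpret L: L4 n w d W G g P Q lam
    using qh nd Gfin Gsub gG P Q PQ QP Pw eig by (simp add: L4_def)
  show ?thesis
    using L.main unfolding Let_def L.Wg_def L.\<pi>_def L.W'_def L.I_def L.res_def L.cj_def L.C_def .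
qed

end
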